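(* Let $m\ge 1$ and $n$ be integers with $\binom{m+1}{2}\le n\le J(m)$, where $J(m)=\sum_{j=1}^m j\lfloor m/j\rfloor$. Then there exist symmetric Knowlton-Graham partitions of $\{1,\ldots,n\}$ of order $m$. Equivalently, there is a symmetric $m\times m$ matrix with entries in $\{0,1\}$ whose row sums $(t_1,\ldots,t_m)$ (which equal its column sums) satisfy $j\mid t_j$ and $t_j\ge 1$ for all $1\le j\le m$, $t_m=m$, and $t_1+\cdots+t_m=n$. *)

theory Defs
  imports Main
begin

definition J :: "nat \<Rightarrow> nat" where
  "J m = (\<Sum>j=1..m. j * (m div j))"

end

theory Submission
  imports Defs
begin

lemma count_steps:
  fixes C :: "nat \<Rightarrow> nat"
  assumes "\<forall>y. y < x + n \<longrightarrow> C y \<le> C (Suc y) \<and> C (Suc y) \<le> Suc (C y)"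
  shows "card {y. y < n \<and> x + y \<in> {z. C (Suc z) = Suc (C z)}} = C (x + n) - C x
         \<and> C x \<le> C (x + n)"
  using assms
proof (induction n)
  case 0
  then show ?case by simp
next
  case (Suc n)
  have IH: "card {y. y < n \<and> x + y \<in> {z. C (Suc z) = Suc (C z)}} = C (x + n) - C x
         \<and> C x \<le> C (x + n)" using Suc by auto
  have st: "C (x+n) \<le> C (Suc (x+n)) \<and> C (Suc (x+n)) \<le> Suc (C (x+n))" using Suc.prems by auto
  have eq: "{y. y < Suc n \<and> x + y \<in> {z. C (Suc z) = Suc (C z)}} =
        {y. y < n \<and> x + y \<in> {z. C (Suc z) = Suc (C z)}} \<union>
        (if C (Suc (x+n)) = Suc (C (x+n)) then {n} else {})"
    by (auto simp: less_Suc_eq)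
  show ?case
  proof (cases "C (Suc (x+n)) = Suc (C (x+n))")
    case True
    have "card {y. y < Suc n \<and> x + y \<in> {z. C (Suc z) = Suc (C z)}} =
          card {y. y < n \<and> x + y \<in> {z. C (Suc z) = Suc (C z)}} + 1"
      unfolding eq using True by (simp add: card_insert_if)
    then show ?thesis using IH True by (simp add: Suc_diff_le)
  next
    case False
    then have "C (Suc (x+n)) = C (x+n)" using st by auto
    then show ?thesis unfolding eq using IH False by simp
  qed
qed

lemma hankel:
  fixes w :: "nat \<Rightarrow> nat" and N :: nat
  assumes N: "N \<ge> 1"
    and mono: "\<forall>x. Suc x < N \<longrightarrow> w x \<le> w (Suc x)"
    and step: "\<forall>x. Suc x < N \<longrightarrow> w (Suc x) \<le> Suc (w x)"
    and top: "w (N - 1) \<le> N"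
  shows "\<exists>A. \<forall>x<N. card {y. y < N \<and> x + y \<in> A} = w x"
proof -
  define fr where "fr y = (Suc y = N \<or> w (Suc y) = w y)" for y
  define s where "s z = card {y. y < z \<and> fr y}" for z
  define lo where "lo = w 0"
  define C where "C z = (if z < N then min lo (s z) else min lo (s (z - N)) + w (z - N))" for z
  have sSuc: "s (Suc z) = s z + (if fr z then 1 else 0)" for z
  proof -
    have "{y. y < Suc z \<and> fr y} = {y. y < z \<and> fr y} \<union> (if fr z then {z} else {})"
      by (auto simp: less_Suc_eq)
    then show ?thesis unfolding s_def by (simp add: card_insert_if)
  qed
  have s0: "s 0 = 0" unfolding s_def by simp
  have ws: "z < N \<Longrightarrow> w z + s z = w 0 + z" for z
  proof (induction z)
    case 0 then show ?case by (simp add: s0)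
  next
    case (Suc z)
    then have "Suc z < N" by simp
    then have h1: "w z \<le> w (Suc z)" "w (Suc z) \<le> Suc (w z)" using mono step by auto
    have IH: "w z + s z = w 0 + z" using Suc by simp
    show ?case
    proof (cases "w (Suc z) = w z")
      case True
      then have "fr z" unfolding fr_def by simp
      then show ?thesis using IH True sSuc[of z] by simp
    next
      case False
      then have "\<not> fr z" unfolding fr_def using \<open>Suc z < N\<close> by simp
      then show ?thesis using IH False h1 sSuc[of z] by simp
    qed
  qed
  obtain N' where N': "N = Suc N'" using N by (cases N) auto
  have frN: "fr N'" unfolding fr_def using N' by simp
  have sN'': "s N = s N' + 1" using sSuc[of N'] frN N' by simp
  have wsN: "w N' + s N' = w 0 + N'" using ws[of N'] N' by simp
  have topN: "w N' \<le> N" using top N' by simp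
  have sN: "s N \<ge> lo" using sN'' wsN topN N' unfolding lo_def by linarith
  have unit: "C y \<le> C (Suc y) \<and> C (Suc y) \<le> Suc (C y)" if "Suc y < 2 * N" for y
  proof -
    consider (a) "Suc y < N" | (b) "Suc y = N" | (c) "N \<le> y" using that by linarith
    then show ?thesis
    proof cases
      case a
      then show ?thesis unfolding C_def using sSuc[of y] by auto
    next
      case b
      then have "s N = s y + 1" using sSuc[of y] unfolding fr_def by simp
      then show ?thesis unfolding C_def using b sN lo_def s0 by auto
    next
      case c
      define z where "z = y - N"
      have zN: "Suc z < N" using c that unfolding z_def by linarith
      have Cy: "C y = min lo (s z) + w z" unfolding C_def z_def using c by simp
      have Cy1: "C (Suc y) = min lo (s (Suc z)) + w (Suc z)" unfolding C_def z_def using c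
        by (simp add: Suc_diff_le)
      have h1: "w z \<le> w (Suc z)" "w (Suc z) \<le> Suc (w z)" using mono step zN by auto
      show ?thesis
      proof (cases "w (Suc z) = w z")
        case True
        then show ?thesis using Cy Cy1 sSuc[of z] by auto
      next
        case False
        then have "\<not> fr z" unfolding fr_def using zN by simp
        then show ?thesis using Cy Cy1 sSuc[of z] h1 False by auto
      qed
    qed
  qed
  show ?thesis
  proof (intro exI allI impI)
    fix x assume x: "x < N"
    have "\<forall>y. y < x + N \<longrightarrow> C y \<le> C (Suc y) \<and> C (Suc y) \<le> Suc (C y)"
      using unit x by auto
    from count_steps[OF this]
    have "card {y. y < N \<and> x + y \<in> {z. C (Suc z) = Suc (C z)}} = C (x + N) - C x" by simp
    moreover have "C (x + N) = min lo (s x) + w x" unfolding C_def by simp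
    moreover have "C x = min lo (s x)" unfolding C_def using x by simp
    ultimately show "card {y. y < N \<and> x + y \<in> {z. C (Suc z) = Suc (C z)}} = w x" by simp
  qed
qed


lemma mult_div_le: "k * (m div k) \<le> (m::nat)"
  by (metis div_mult_mod_eq le_add1 mult.commute)

lemma sum_indicator_card:
  fixes m :: nat
  shows "(\<Sum>j<m. (if P j then 1 else 0::nat)) = card {j. j < m \<and> P j}"
proof (induction m)
  case 0
  then show ?case by simp
next
  case (Suc m)
  have eq: "{j. j < Suc m \<and> P j} = {j. j < m \<and> P j} \<union> (if P m then {m} else {})"
    by (auto simp: less_Suc_eq)
  show ?case unfolding eq using Suc by (simp add: card_insert_if)
qed

lemma realize:
  fixes t :: "nat \<Rightarrow> nat" and m :: nat
  assumes m: "m \<ge> 1"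
    and le: "\<forall>k\<in>{1..m}. t k \<le> m"
    and gap: "\<forall>k\<in>{1..m}. \<forall>y. t k < y \<and> y \<le> m \<longrightarrow> (\<exists>j\<in>{1..m}. t j = y)"
  shows "\<exists>M::nat\<Rightarrow>nat\<Rightarrow>nat. (\<forall>i\<in>{1..m}. \<forall>j\<in>{1..m}. M i j \<in> {0,1} \<and> M i j = M j i)
           \<and> (\<forall>i\<in>{1..m}. (\<Sum>j=1..m. M i j) = t i)"
proof -
  define xs where "xs = sort_key t [1..<Suc m]"
  have len: "length xs = m" unfolding xs_def by simp
  have dist: "distinct xs" unfolding xs_def by simp
  have setxs: "set xs = {1..m}" unfolding xs_def by auto
  have sorted: "sorted (map t xs)" unfolding xs_def by simp
  define w where "w i = t (xs ! i)" for i
  have inV: "i < m \<Longrightarrow> xs ! i \<in> {1..m}" for i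
    using setxs len nth_mem by blast
  have wmono: "i \<le> j \<Longrightarrow> j < m \<Longrightarrow> w i \<le> w j" for i j
    using sorted_nth_mono[OF sorted, of i j] len unfolding w_def by simp
  have mono: "\<forall>x. Suc x < m \<longrightarrow> w x \<le> w (Suc x)" using wmono by simp
  have step: "\<forall>x. Suc x < m \<longrightarrow> w (Suc x) \<le> Suc (w x)"
  proof (intro allI impI)
    fix x assume x: "Suc x < m"
    show "w (Suc x) \<le> Suc (w x)"
    proof (rule ccontr)
      assume c: "\<not> w (Suc x) \<le> Suc (w x)"
      have "w (Suc x) \<le> m" using le inV[OF x] unfolding w_def by blast
      then have "t (xs ! x) < Suc (w x) \<and> Suc (w x) \<le> m" using c unfolding w_def by simp
      then obtain j where j: "j \<in> {1..m}" "t j = Suc (w x)"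
        using gap inV[of x] x by fastforce
      then obtain l where l: "l < m" "xs ! l = j" using setxs len by (metis in_set_conv_nth)
      have wl: "w l = Suc (w x)" using l j unfolding w_def by simp
      show False
      proof (cases "l \<le> x")
        case True
        then show False using wmono[of l x] x wl by simp
      next
        case False
        then show False using wmono[of "Suc x" l] l wl c by simp
      qed
    qed
  qed
  have top: "w (m - 1) \<le> m" using le inV[of "m-1"] m unfolding w_def by auto
  obtain A where A: "\<forall>x<m. card {y. y < m \<and> x + y \<in> A} = w x"
    using hankel[OF m mono step top] by blast
  define M where "M u v = (if \<exists>i<m. \<exists>j<m. xs!i = u \<and> xs!j = v \<and> i + j \<in> A then 1 else 0::nat)" for u v
  have Mij: "i < m \<Longrightarrow> j < m \<Longrightarrow> M (xs!i) (xs!j) = (if i + j \<in> A then 1 else 0)" for i j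
    unfolding M_def using dist len by (auto simp: nth_eq_iff_index_eq)
  have bij: "bij_betw ((!) xs) {..<m} {1..m}"
    using bij_betw_nth[OF dist] len setxs by simp
  show ?thesis
  proof (intro exI[of _ M] conjI ballI)
    fix i j assume "i \<in> {1..m}" "j \<in> {1..m}"
    show "M i j \<in> {0, 1}" unfolding M_def by simp
    have "(\<exists>i'<m. \<exists>j'<m. xs!i' = i \<and> xs!j' = j \<and> i' + j' \<in> A) =
          (\<exists>i'<m. \<exists>j'<m. xs!i' = j \<and> xs!j' = i \<and> i' + j' \<in> A)"
      by (metis add.commute)
    then show "M i j = M j i" unfolding M_def by simp
  next
    fix u assume u: "u \<in> {1..m}"
    then obtain i where i: "i < m" "xs ! i = u" using setxs len by (metis in_set_conv_nth)
    have "(\<Sum>v=1..m. M u v) = (\<Sum>j<m. M u (xs ! j))"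
      using sum.reindex_bij_betw[OF bij, of "M u"] by simp
    also have "\<dots> = (\<Sum>j<m. (if i + j \<in> A then 1 else 0))"
      using Mij i by (intro sum.cong) auto
    also have "\<dots> = card {j. j < m \<and> i + j \<in> A}" by (rule sum_indicator_card)
    also have "\<dots> = w i" using A i by simp
    also have "\<dots> = t u" unfolding w_def using i by simp
    finally show "(\<Sum>v=1..m. M u v) = t u" .
  qed
qed

definition G :: "nat \<Rightarrow> nat \<Rightarrow> nat" where
  "G m p = (\<Sum>k\<in>{2..m}. (if k \<le> p then k * (m div k) else k))"

lemma G_step:
  assumes "1 \<le> p" "Suc p \<le> m"
  shows "G m (Suc p) + Suc p = G m p + Suc p * (m div Suc p)"
proof -
  have mem: "Suc p \<in> {2..m}" using assms by simp
  have fin: "finite {2..m}" by simp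
  define R1 where "R1 = (\<Sum>k\<in>{2..m} - {Suc p}. (if k \<le> Suc p then k * (m div k) else k))"
  define R2 where "R2 = (\<Sum>k\<in>{2..m} - {Suc p}. (if k \<le> p then k * (m div k) else k))"
  have e1: "G m (Suc p) = (if Suc p \<le> Suc p then Suc p * (m div Suc p) else Suc p) + R1"
    unfolding G_def R1_def by (rule sum.remove[OF fin mem])
  have e2: "G m p = (if Suc p \<le> p then Suc p * (m div Suc p) else Suc p) + R2"
    unfolding G_def R2_def by (rule sum.remove[OF fin mem])
  have e3: "R1 = R2" unfolding R1_def R2_def by (intro sum.cong) auto
  have e1': "G m (Suc p) = Suc p * (m div Suc p) + R1" using e1 by simp
  have e2': "G m p = Suc p + R2" using e2 by simp
  show ?thesis using e1' e2' e3 by simp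
qed

lemma G_one:
  assumes "m \<ge> 1"
  shows "G m 1 + 1 = (m + 1) choose 2"
proof -
  have "G m 1 = (\<Sum>k\<in>{2..m}. k)" unfolding G_def by (intro sum.cong) auto
  moreover have "(\<Sum>k\<in>{1..m}. k) = 1 + (\<Sum>k\<in>{2..m}. k)"
    using sum.atLeast_Suc_atMost[of 1 m "\<lambda>k. k"] assms by (simp add: numeral_2_eq_2)
  moreover have "(\<Sum>k\<in>{1..m}. k) = m * (m + 1) div 2"
  proof -
    have "(\<Sum>k\<in>{0..m}. k) = (\<Sum>k\<in>{1..m}. k)"
      by (simp add: sum.atLeast_Suc_atMost)
    then show ?thesis using gauss_sum_nat[of m] by (simp add: mult.commute)
  qed
  moreover have "(m + 1) choose 2 = (m + 1) * m div 2" by (simp add: choose_two)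
  ultimately show ?thesis by (simp add: mult.commute)
qed

lemma div_one_big:
  fixes m j :: nat
  assumes "j \<le> m" "m < 2 * j"
  shows "m div j = 1"
proof -
  have "j > 0" using assms by simp
  have "j div j \<le> m div j" using assms by (intro div_le_mono) simp
  then have "m div j \<ge> 1" using \<open>j > 0\<close> by simp
  moreover have "m div j < 2" using assms \<open>j > 0\<close> by (simp add: div_less_iff_less_mult mult.commute)
  ultimately show ?thesis by simp
qed

lemma J_G:
  assumes "m \<ge> 1"
  shows "J m = G m ((m + 1) div 2) + m"
proof -
  have "J m = 1 * (m div 1) + (\<Sum>j\<in>{2..m}. j * (m div j))"
    unfolding J_def using sum.atLeast_Suc_atMost[of 1 m "\<lambda>j. j * (m div j)"] assms
    by (simp add: numeral_2_eq_2)
  moreover have "(\<Sum>j\<in>{2..m}. j * (m div j)) = G m ((m + 1) div 2)"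
    unfolding G_def
  proof (intro sum.cong refl)
    fix j assume j: "j \<in> {2..m}"
    show "j * (m div j) = (if j \<le> (m + 1) div 2 then j * (m div j) else j)"
    proof (cases "j \<le> (m + 1) div 2")
      case False
      then have "m < 2 * j" by linarith
      then have "m div j = 1" using div_one_big j by simp
      then show ?thesis using False by simp
    qed simp
  qed
  ultimately show ?thesis by simp
qed

lemma cover:
  assumes m: "m \<ge> 1"
  shows "1 \<le> q \<Longrightarrow> q \<le> m \<Longrightarrow> (m + 1) choose 2 \<le> n \<Longrightarrow> n \<le> G m q + m \<Longrightarrow>
    \<exists>p a. 1 \<le> p \<and> p \<le> q \<and> p \<le> a \<and> a \<le> m \<and> n = a + G m p"
proof (induction q arbitrary: n)
  case 0
  then show ?case by simp
next
  case (Suc q)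
  show ?case
  proof (cases "q = 0")
    case True
    then have "n = (n - G m 1) + G m 1" "1 \<le> n - G m 1" "n - G m 1 \<le> m"
      using Suc.prems G_one[OF m] by auto
    then show ?thesis using True by (intro exI[of _ 1] exI[of _ "n - G m 1"]) auto
  next
    case False
    show ?thesis
    proof (cases "n \<le> G m q + m")
      case True
      then obtain p a where "1 \<le> p \<and> p \<le> q \<and> p \<le> a \<and> a \<le> m \<and> n = a + G m p"
        using Suc False by fastforce
      then show ?thesis by (intro exI[of _ p] exI[of _ a]) auto
    next
      case nle: False
      have st: "G m (Suc q) + Suc q = G m q + Suc q * (m div Suc q)"
        using G_step[of q m] False Suc.prems by simp
      have "Suc q * (m div Suc q) \<le> m" by (rule mult_div_le)
      then have "n = (n - G m (Suc q)) + G m (Suc q)" "Suc q \<le> n - G m (Suc q)" "n - G m (Suc q) \<le> m"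
        using st nle Suc.prems by linarith+
      then show ?thesis using Suc.prems by (intro exI[of _ "Suc q"] exI[of _ "n - G m (Suc q)"]) auto
    qed
  qed
qed

theorem theorem2:
  fixes m n :: nat
  assumes "m \<ge> 1"
    and "(m + 1) choose 2 \<le> n"
    and "n \<le> J m"
  shows "\<exists>M :: nat \<Rightarrow> nat \<Rightarrow> nat.
           (\<forall>i\<in>{1..m}. \<forall>j\<in>{1..m}. M i j \<in> {0, 1} \<and> M i j = M j i) \<and>
           (\<forall>j\<in>{1..m}. j dvd (\<Sum>k=1..m. M j k) \<and> (\<Sum>k=1..m. M j k) \<ge> 1) \<and>
           (\<Sum>k=1..m. M m k) = m \<and>
           (\<Sum>j=1..m. \<Sum>k=1..m. M j k) = n"
proof -
  have m: "m \<ge> 1" using assms by simp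
  define P where "P = (m + 1) div 2"
  have P1: "1 \<le> P" "P \<le> m" using m unfolding P_def by auto
  have "n \<le> G m P + m" using assms J_G[OF m] unfolding P_def by simp
  then obtain p a where pa: "1 \<le> p" "p \<le> P" "p \<le> a" "a \<le> m" "n = a + G m p"
    using cover[OF m P1 assms(2)] by blast
  define t where "t k = (if k = 1 then a else if k \<le> p then k * (m div k) else k)" for k
  have t_ge: "t k \<ge> p" if k: "k \<in> {1..m}" for k
  proof (cases "k = 1")
    case True then show ?thesis using pa unfolding t_def by simp
  next
    case False
    show ?thesis
    proof (cases "k \<le> p")
      case True
      have "m = k * (m div k) + m mod k" by simp
      moreover have "m mod k < k" using k by simp
      moreover have "2 * p \<le> m + 1" using pa unfolding P_def by linarith
      ultimately have "k * (m div k) \<ge> p" using True by linarith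
      then show ?thesis using True False unfolding t_def by simp
    next
      case False2: False
      then show ?thesis using False unfolding t_def by simp
    qed
  qed
  have t_le: "\<forall>k\<in>{1..m}. t k \<le> m"
  proof
    fix k assume k: "k \<in> {1..m}"
    have "k * (m div k) \<le> m" by (rule mult_div_le)
    then show "t k \<le> m" using pa k unfolding t_def by auto
  qed
  have t_gap: "\<forall>k\<in>{1..m}. \<forall>y. t k < y \<and> y \<le> m \<longrightarrow> (\<exists>j\<in>{1..m}. t j = y)"
  proof (intro ballI allI impI)
    fix k y assume k: "k \<in> {1..m}" and y: "t k < y \<and> y \<le> m"
    have "y > p" using t_ge[OF k] y by simp
    then have "t y = y" "y \<in> {1..m}" using y pa unfolding t_def by auto
    then show "\<exists>j\<in>{1..m}. t j = y" by blast
  qed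
  obtain M :: "nat \<Rightarrow> nat \<Rightarrow> nat" where M1: "\<forall>i\<in>{1..m}. \<forall>j\<in>{1..m}. M i j \<in> {0,1} \<and> M i j = M j i"
    and M2: "\<forall>i\<in>{1..m}. (\<Sum>j=1..m. M i j) = t i"
    using realize[OF m t_le t_gap] by blast
  show ?thesis
  proof (intro exI[of _ M] conjI)
    show "\<forall>i\<in>{1..m}. \<forall>j\<in>{1..m}. M i j \<in> {0, 1} \<and> M i j = M j i" using M1 .
  next
    show "\<forall>j\<in>{1..m}. j dvd (\<Sum>k=1..m. M j k) \<and> (\<Sum>k=1..m. M j k) \<ge> 1"
    proof
      fix j assume j: "j \<in> {1..m}"
      have "j dvd t j" unfolding t_def by auto
      then show "j dvd (\<Sum>k=1..m. M j k) \<and> (\<Sum>k=1..m. M j k) \<ge> 1"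
        using M2 j t_ge[OF j] pa by simp
    qed
  next
    have "t m = m"
    proof (cases "m = 1")
      case True then show ?thesis using pa unfolding t_def by simp
    next
      case False
      then have "p < m" using pa unfolding P_def by linarith
      then show ?thesis using False unfolding t_def by simp
    qed
    then show "(\<Sum>k=1..m. M m k) = m" using M2 m by simp
  next
    have "(\<Sum>j=1..m. \<Sum>k=1..m. M j k) = (\<Sum>j=1..m. t j)" using M2 by (intro sum.cong) auto
    also have "\<dots> = t 1 + (\<Sum>j=2..m. t j)"
      using sum.atLeast_Suc_atMost[of 1 m t] m by (simp add: numeral_2_eq_2)
    also have "(\<Sum>j=2..m. t j) = G m p" unfolding G_def t_def by (intro sum.cong) auto
    also have "t 1 = a" unfolding t_def by simp
    finally show "(\<Sum>j=1..m. \<Sum>k=1..m. M j k) = n" using pa by simp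
  qed
qed

end
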